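(* Let $\varphi,\psi:\mathbb{H}\to\mathbb{H}$ be linear isometries with $\varphi(1)=1$. The algebra $\mathbb{H}\times\mathbb{H}_{(\varphi,\psi)}$ satisfies $(z^2,z^2,z^2)=0$ for all $z$ if and only if (i) $\varphi(\varphi(x)x)=\varphi(x)x$ for all $x\in\mathbb{H}$, (ii) $\varphi(\bar x\psi(x))=\bar x\psi(x)$ for all $x\in\mathbb{H}$, (iii) $\psi(\psi(y)\bar x+y\varphi(x))=\psi(y)\bar x+y\varphi(x)$ for all $x,y\in\mathbb{H}$.
   Context: $(a,b,c)=(ab)c-a(bc)$. On $\mathbb{H}\times\mathbb{H}$ the Cayley–Dickson product is $(x,y)\bullet(u,v)=(xu-\bar v y,\ y\bar u+vx)$. $\mathbb{H}\times\mathbb{H}_{(\varphi,\psi)}$ denotes $\mathbb{H}\times\mathbb{H}$ with product $(x,y)\odot(u,v)=(\varphi(x),\psi(y))\bullet(u,v)$ and norm $\|(x,y)\|^2=|x|^2+|y|^2$; it has left unit $(1,0)$. *)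

theory Defs
  imports "HOL-Analysis.Analysis"
begin

text \<open>Quaternions: a + b i + c j + d k is represented as (a,b,c,d) in R^4.
  The product-type instances give the componentwise vector space structure and the
  Euclidean norm sqrt(a^2+b^2+c^2+d^2).\<close>

type_synonym quat = "real \<times> real \<times> real \<times> real"

definition qone :: quat where "qone = (1, 0, 0, 0)"

definition qmult :: "quat \<Rightarrow> quat \<Rightarrow> quat" (infixl "\<cdot>\<^sub>q" 70) where
  "qmult p q = (case p of (a1, b1, c1, d1) \<Rightarrow> case q of (a2, b2, c2, d2) \<Rightarrow>
     (a1*a2 - b1*b2 - c1*c2 - d1*d2,
      a1*b2 + b1*a2 + c1*d2 - d1*c2,
      a1*c2 - b1*d2 + c1*a2 + d1*b2,
      a1*d2 + b1*c2 - c1*b2 + d1*a2))"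

definition qcnj :: "quat \<Rightarrow> quat" where
  "qcnj p = (case p of (a, b, c, d) \<Rightarrow> (a, -b, -c, -d))"

definition cd_mult :: "quat \<times> quat \<Rightarrow> quat \<times> quat \<Rightarrow> quat \<times> quat" where
  "cd_mult p q = (case p of (x, y) \<Rightarrow> case q of (u, v) \<Rightarrow>
     (x \<cdot>\<^sub>q u - qcnj v \<cdot>\<^sub>q y, y \<cdot>\<^sub>q qcnj u + v \<cdot>\<^sub>q x))"

definition tw_mult :: "(quat \<Rightarrow> quat) \<Rightarrow> (quat \<Rightarrow> quat) \<Rightarrow> quat \<times> quat \<Rightarrow> quat \<times> quat \<Rightarrow> quat \<times> quat" where
  "tw_mult \<phi> \<psi> p q = (case p of (x, y) \<Rightarrow> cd_mult (\<phi> x, \<psi> y) q)"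

definition assoc :: "('a \<Rightarrow> 'a \<Rightarrow> 'a::ab_group_add) \<Rightarrow> 'a \<Rightarrow> 'a \<Rightarrow> 'a \<Rightarrow> 'a" where
  "assoc m a b c = m (m a b) c - m a (m b c)"

definition linear_isometry :: "(quat \<Rightarrow> quat) \<Rightarrow> bool" where
  "linear_isometry f \<longleftrightarrow> linear f \<and> (\<forall>x. norm (f x) = norm x)"

end

theory Submission
  imports Defs
begin

lemma qmult_add_left: "(x + y) \<cdot>\<^sub>q z = x \<cdot>\<^sub>q z + y \<cdot>\<^sub>q z"
  by (cases x rule: prod_cases4; cases y rule: prod_cases4; cases z rule: prod_cases4)
     (simp add: qmult_def algebra_simps)
lemma qmult_add_right: "z \<cdot>\<^sub>q (x + y) = z \<cdot>\<^sub>q x + z \<cdot>\<^sub>q y"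
  by (cases x rule: prod_cases4; cases y rule: prod_cases4; cases z rule: prod_cases4)
     (simp add: qmult_def algebra_simps)
lemma qmult_scale_left: "(c *\<^sub>R x) \<cdot>\<^sub>q z = c *\<^sub>R (x \<cdot>\<^sub>q z)"
  by (cases x rule: prod_cases4; cases z rule: prod_cases4)
     (simp add: qmult_def algebra_simps)
lemma qmult_scale_right: "z \<cdot>\<^sub>q (c *\<^sub>R x) = c *\<^sub>R (z \<cdot>\<^sub>q x)"
  by (cases x rule: prod_cases4; cases z rule: prod_cases4)
     (simp add: qmult_def algebra_simps)
lemma qcnj_add: "qcnj (x + y) = qcnj x + qcnj y"
  by (cases x rule: prod_cases4; cases y rule: prod_cases4) (simp add: qcnj_def)
lemma qcnj_scale: "qcnj (c *\<^sub>R x) = c *\<^sub>R qcnj x"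
  by (cases x rule: prod_cases4) (simp add: qcnj_def)
lemma qone_left: "qone \<cdot>\<^sub>q x = x"
  by (cases x rule: prod_cases4) (simp add: qmult_def qone_def)
lemma qone_right: "x \<cdot>\<^sub>q qone = x"
  by (cases x rule: prod_cases4) (simp add: qmult_def qone_def)
lemma qcnj_0: "qcnj 0 = 0" by (simp add: qcnj_def zero_prod_def)
lemma qcnj_one: "qcnj qone = qone" by (simp add: qcnj_def qone_def)
lemma qmult_0_left: "0 \<cdot>\<^sub>q x = 0" using qmult_scale_left[of 0 0 x] by simp
lemma qmult_0_right: "x \<cdot>\<^sub>q 0 = 0" using qmult_scale_right[of x 0 0] by simp

lemma cd_add_left: "cd_mult (p + p') q = cd_mult p q + cd_mult p' q"
  by (simp add: case_prod_beta cd_mult_def qmult_add_left qmult_add_right qcnj_add algebra_simps)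
lemma cd_add_right: "cd_mult q (p + p') = cd_mult q p + cd_mult q p'"
  by (simp add: case_prod_beta cd_mult_def qmult_add_left qmult_add_right qcnj_add algebra_simps)
lemma cd_scale_left: "cd_mult (c *\<^sub>R p) q = c *\<^sub>R cd_mult p q"
  by (simp add: case_prod_beta cd_mult_def qmult_scale_left qmult_scale_right qcnj_scale algebra_simps)
lemma cd_scale_right: "cd_mult q (c *\<^sub>R p) = c *\<^sub>R cd_mult q p"
  by (simp add: case_prod_beta cd_mult_def qmult_scale_left qmult_scale_right qcnj_scale algebra_simps)

lemma cd_sq: "cd_mult (a, b) (a, b) = (fst a * 2) *\<^sub>R (a, b) - (a \<bullet> a + b \<bullet> b) *\<^sub>R (qone, 0)"
  by (cases a rule: prod_cases4; cases b rule: prod_cases4)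
     (simp add: cd_mult_def qmult_def qcnj_def qone_def algebra_simps power2_eq_square)

lemma cd_diff_left: "cd_mult (p - p') q = cd_mult p q - cd_mult p' q"
  using cd_add_left[of p "-p'" q] cd_scale_left[of "-1" p' q] by simp
lemma cd_diff_right: "cd_mult q (p - p') = cd_mult q p - cd_mult q p'"
  using cd_add_right[of q p "-p'"] cd_scale_right[of q "-1" p'] by simp

lemma cd_pa: "cd_mult (cd_mult w w) w = cd_mult w (cd_mult w w)"
proof -
  obtain a b where w: "w = (a,b)" by (cases w)
  have u: "cd_mult (qone, 0) w = w" "cd_mult w (qone, 0) = w"
    by (cases w; simp add: cd_mult_def qone_left qone_right qcnj_0 qcnj_one qmult_0_left qmult_0_right)+
  obtain c d where s: "cd_mult w w = c *\<^sub>R w - d *\<^sub>R (qone, 0)"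
    using cd_sq w by blast
  show ?thesis unfolding s
    by (simp add: cd_diff_left cd_diff_right cd_scale_left cd_scale_right u del: scaleR_Pair)
qed

definition Phi :: "(quat \<Rightarrow> quat) \<Rightarrow> (quat \<Rightarrow> quat) \<Rightarrow> quat \<times> quat \<Rightarrow> quat \<times> quat" where
  "Phi f g p = (f (fst p), g (snd p))"

lemma tw_eq: "tw_mult f g p q = cd_mult (Phi f g p) q"
  by (simp add: tw_mult_def Phi_def case_prod_beta)

context
  fixes f g :: "quat \<Rightarrow> quat"
  assumes lf: "linear f" and lg: "linear g"
begin

lemma Phi_add: "Phi f g (p + q) = Phi f g p + Phi f g q"
  by (simp add: Phi_def linear_add[OF lf] linear_add[OF lg])
lemma Phi_scale: "Phi f g (c *\<^sub>R p) = c *\<^sub>R Phi f g p"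
  by (simp add: Phi_def linear_scale[OF lf] linear_scale[OF lg])
lemma Phi_diff: "Phi f g (p - q) = Phi f g p - Phi f g q"
  by (simp add: Phi_def linear_diff[OF lf] linear_diff[OF lg])

lemma M_add_left: "tw_mult f g (p + p') q = tw_mult f g p q + tw_mult f g p' q"
  by (simp add: tw_eq Phi_add cd_add_left)
lemma M_add_right: "tw_mult f g q (p + p') = tw_mult f g q p + tw_mult f g q p'"
  by (simp add: tw_eq cd_add_right)
lemma M_scale_left: "tw_mult f g (c *\<^sub>R p) q = c *\<^sub>R tw_mult f g p q"
  by (simp add: tw_eq Phi_scale cd_scale_left del: scaleR_Pair)
lemma M_scale_right: "tw_mult f g q (c *\<^sub>R p) = c *\<^sub>R tw_mult f g q p"
  by (simp add: tw_eq cd_scale_right del: scaleR_Pair)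

abbreviation "A \<equiv> assoc (tw_mult f g)"

lemma A_add1: "A (p + p') q r = A p q r + A p' q r"
  by (simp add: assoc_def M_add_left M_add_right)
lemma A_add2: "A q (p + p') r = A q p r + A q p' r"
  by (simp add: assoc_def M_add_left M_add_right)
lemma A_add3: "A q r (p + p') = A q r p + A q r p'"
  by (simp add: assoc_def M_add_left M_add_right)
lemma A_scale1: "A (c *\<^sub>R p) q r = c *\<^sub>R A p q r"
  by (simp add: assoc_def M_scale_left M_scale_right scaleR_diff_right del: scaleR_Pair)
lemma A_scale2: "A q (c *\<^sub>R p) r = c *\<^sub>R A q p r"
  by (simp add: assoc_def M_scale_left M_scale_right scaleR_diff_right del: scaleR_Pair)
lemma A_scale3: "A q r (c *\<^sub>R p) = c *\<^sub>R A q r p"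
  by (simp add: assoc_def M_scale_left M_scale_right scaleR_diff_right del: scaleR_Pair)

lemma expand6:
  shows "A (e + t *\<^sub>R s + (t^2) *\<^sub>R q) (e + t *\<^sub>R s + (t^2) *\<^sub>R q) (e + t *\<^sub>R s + (t^2) *\<^sub>R q)
    = A e e e + t *\<^sub>R (A s e e + A e s e + A e e s)
      + t^2 *\<^sub>R (A q e e + A e q e + A e e q + A s s e + A s e s + A e s s)
      + t^3 *\<^sub>R (A s s s + A q s e + A q e s + A s q e + A s e q + A e q s + A e s q)
      + t^4 *\<^sub>R (A q q e + A q e q + A e q q + A s s q + A s q s + A q s s)
      + t^5 *\<^sub>R (A q q s + A q s q + A s q q)
      + t^6 *\<^sub>R A q q q"
  apply (simp only: A_add1 A_add2 A_add3 A_scale1 A_scale2 A_scale3 scaleR_scaleR scaleR_add_right)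
  apply (simp add: algebra_simps power_def)
  done

lemma cd_unit_left: "cd_mult (qone, 0) w = w"
  by (cases w; simp add: cd_mult_def qone_left qone_right qcnj_0 qcnj_one qmult_0_left qmult_0_right)
lemma cd_unit_right: "cd_mult w (qone, 0) = w"
  by (cases w; simp add: cd_mult_def qone_left qone_right qcnj_0 qcnj_one qmult_0_left qmult_0_right)

context
  assumes f1: "f qone = qone"
begin

lemma Phi_e: "Phi f g (qone, 0) = (qone, 0)"
  by (simp add: Phi_def f1 linear_0[OF lg])
lemma M_e_left: "tw_mult f g (qone, 0) q = q"
  by (simp add: tw_eq Phi_e cd_unit_left)
lemma M_e_right: "tw_mult f g p (qone, 0) = Phi f g p"
  by (simp add: tw_eq cd_unit_right)
lemma A_e: "A (qone, 0) q r = 0"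
  by (simp add: assoc_def M_e_left)
lemma closure: "Phi f g w = w \<Longrightarrow> Phi f g (cd_mult w w) = cd_mult w w"
proof -
  assume P: "Phi f g w = w"
  obtain a b where w: "w = (a,b)" by (cases w)
  obtain c d where s: "cd_mult w w = c *\<^sub>R w - d *\<^sub>R (qone, 0)"
    using cd_sq w by blast
  show ?thesis unfolding s
    by (simp only: Phi_diff Phi_scale P Phi_e)
qed
end
end

lemma coeff12:
  fixes C1 C2 C3 C4 C5 C6 :: "'a::real_inner"
  assumes H: "\<And>t::real. t *\<^sub>R C1 + t^2 *\<^sub>R C2 + t^3 *\<^sub>R C3 + t^4 *\<^sub>R C4 + t^5 *\<^sub>R C5 + t^6 *\<^sub>R C6 = 0"
  shows "C1 = 0 \<and> C2 = 0"
proof -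
  have "C = 0" if "C \<in> {C1, C2}" for C
  proof -
    define c where "c = (\<lambda>i. [0, C1 \<bullet> C, C2 \<bullet> C, C3 \<bullet> C, C4 \<bullet> C, C5 \<bullet> C, C6 \<bullet> C] ! i)"
    have "\<forall>t::real. (\<Sum>i\<le>6. c i * t^i) = 0"
    proof
      fix t :: real
      have "(t *\<^sub>R C1 + t^2 *\<^sub>R C2 + t^3 *\<^sub>R C3 + t^4 *\<^sub>R C4 + t^5 *\<^sub>R C5 + t^6 *\<^sub>R C6) \<bullet> C = 0"
        using H by simp
      then show "(\<Sum>i\<le>6. c i * t^i) = 0"
        by (simp add: c_def eval_nat_numeral inner_add_left algebra_simps)
    qed
    then have "\<forall>i\<le>6. c i = 0" using polyfun_eq_0 by blast
    then have "c 1 = 0" "c 2 = 0" by auto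
    then show "C = 0" using that by (auto simp: c_def)
  qed
  then show ?thesis by auto
qed

theorem proposition6:
  fixes \<phi> \<psi> :: "quat \<Rightarrow> quat"
  assumes "linear_isometry \<phi>" and "linear_isometry \<psi>" and "\<phi> qone = qone"
  shows "(\<forall>z. let z2 = tw_mult \<phi> \<psi> z z in assoc (tw_mult \<phi> \<psi>) z2 z2 z2 = 0)
    \<longleftrightarrow> ((\<forall>x. \<phi> (\<phi> x \<cdot>\<^sub>q x) = \<phi> x \<cdot>\<^sub>q x)
       \<and> (\<forall>x. \<phi> (qcnj x \<cdot>\<^sub>q \<psi> x) = qcnj x \<cdot>\<^sub>q \<psi> x)
       \<and> (\<forall>x y. \<psi> (\<psi> y \<cdot>\<^sub>q qcnj x + y \<cdot>\<^sub>q \<phi> x) = \<psi> y \<cdot>\<^sub>q qcnj x + y \<cdot>\<^sub>q \<phi> x))"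
proof -
  have lf: "linear \<phi>" and lg: "linear \<psi>" and nf: "\<And>x. norm (\<phi> x) = norm x"
    and ng: "\<And>x. norm (\<psi> x) = norm x"
    using assms(1,2) by (auto simp: linear_isometry_def)
  note f1 = assms(3)
  let ?M = "tw_mult \<phi> \<psi>"
  let ?P = "Phi \<phi> \<psi>"
  let ?e = "(qone, 0::quat)"
  have Pinj: "?P x = 0 \<Longrightarrow> x = 0" for x
  proof -
    assume "?P x = 0"
    then have "\<phi> (fst x) = 0" "\<psi> (snd x) = 0" by (auto simp: Phi_def zero_prod_def)
    then have "norm (fst x) = 0" "norm (snd x) = 0" using nf ng by (metis norm_zero)+
    then show "x = 0" by (simp add: prod_eq_iff)
  qed
  have coef: "assoc ?M (u + ?P u) ?e ?e = 0 \<and>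
     assoc ?M (?M u u) ?e ?e + assoc ?M (u + ?P u) (u + ?P u) ?e + assoc ?M (u + ?P u) ?e (u + ?P u) = 0"
    if H: "\<forall>z. let z2 = ?M z z in assoc ?M z2 z2 z2 = 0" for u
  proof -
    define s where "s = u + ?P u"
    define q where "q = ?M u u"
    have sq: "?M (?e + t *\<^sub>R u) (?e + t *\<^sub>R u) = ?e + t *\<^sub>R s + (t^2) *\<^sub>R q" for t
      unfolding s_def q_def
      by (simp add: M_add_left[OF lf lg] M_add_right[OF lf lg] M_scale_left[OF lf lg]
          M_scale_right[OF lf lg] M_e_left[OF lf lg f1] M_e_right[OF lf lg f1] Phi_add[OF lf lg] Phi_scale[OF lf lg] Phi_e[OF lf lg f1] power2_eq_square
          algebra_simps del: scaleR_Pair)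
    have Ae: "\<And>q r. assoc ?M ?e q r = 0" using A_e[OF lf lg f1] .
    have "\<And>t::real. t *\<^sub>R (assoc ?M s ?e ?e)
      + t^2 *\<^sub>R (assoc ?M q ?e ?e + assoc ?M s s ?e + assoc ?M s ?e s)
      + t^3 *\<^sub>R (assoc ?M s s s + assoc ?M q s ?e + assoc ?M q ?e s + assoc ?M s q ?e + assoc ?M s ?e q)
      + t^4 *\<^sub>R (assoc ?M q q ?e + assoc ?M q ?e q + assoc ?M s s q + assoc ?M s q s + assoc ?M q s s)
      + t^5 *\<^sub>R (assoc ?M q q s + assoc ?M q s q + assoc ?M s q q)
      + t^6 *\<^sub>R assoc ?M q q q = 0"
    proof -
      fix t :: real
      have "assoc ?M (?e + t *\<^sub>R s + (t^2) *\<^sub>R q) (?e + t *\<^sub>R s + (t^2) *\<^sub>R q) (?e + t *\<^sub>R s + (t^2) *\<^sub>R q) = 0"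
        using H[rule_format, of "?e + t *\<^sub>R u"] by (simp add: sq Let_def del: scaleR_Pair)
      then show "?thesis t" unfolding expand6[OF lf lg] by (simp add: Ae del: scaleR_Pair)
    qed
    from coeff12[OF this] show ?thesis unfolding s_def q_def by auto
  qed
  have fwd: "?P (?M u u) = ?M u u" if H: "\<forall>z. let z2 = ?M z z in assoc ?M z2 z2 z2 = 0" for u
  proof -
    have PP: "?P (?P x) = x" for x
    proof -
      have "assoc ?M (x + ?P x) ?e ?e = 0" using coef[OF H] by blast
      then have "?P (?P (x + ?P x)) = ?P (x + ?P x)"
        by (simp add: assoc_def M_e_right[OF lf lg f1] M_e_left[OF lf lg f1] Phi_e[OF lf lg f1])
      then have "?P (?P (?P x) - x) = 0"
        by (simp add: Phi_add[OF lf lg] Phi_diff[OF lf lg])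
      then have "?P (?P x) - x = 0" by (rule Pinj)
      then show ?thesis by simp
    qed
    define s where "s = u + ?P u"
    have Ps: "?P s = s" unfolding s_def by (simp add: Phi_add[OF lf lg] PP)
    have "assoc ?M (?M u u) ?e ?e + assoc ?M s s ?e + assoc ?M s ?e s = 0"
      using coef[OF H] unfolding s_def by blast
    moreover have "assoc ?M s ?e s = 0"
      by (simp add: assoc_def M_e_right[OF lf lg f1] M_e_left[OF lf lg f1] Phi_e[OF lf lg f1] Ps)
    moreover have "assoc ?M s s ?e = 0"
      by (simp add: assoc_def M_e_right[OF lf lg f1] M_e_left[OF lf lg f1] Phi_e[OF lf lg f1] Ps tw_eq closure[OF lf lg f1] cd_unit_right[OF lf lg])
    moreover have "assoc ?M (?M u u) ?e ?e = ?M u u - ?P (?M u u)"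
      by (simp add: assoc_def M_e_right[OF lf lg f1] M_e_left[OF lf lg f1] Phi_e[OF lf lg f1] PP)
    ultimately show ?thesis by simp
  qed
  have z0: "\<phi> 0 = 0" "\<psi> 0 = 0" using linear_0[OF lf] linear_0[OF lg] by auto
  show ?thesis
  proof
    assume H: "\<forall>z. let z2 = ?M z z in assoc ?M z2 z2 z2 = 0"
    have i: "\<phi> (\<phi> x \<cdot>\<^sub>q x) = \<phi> x \<cdot>\<^sub>q x" for x
      using fwd[OF H, of "(x, 0)"]
      by (simp add: tw_eq Phi_def cd_mult_def z0 qcnj_0 qmult_0_left qmult_0_right)
    have ii: "\<phi> (qcnj x \<cdot>\<^sub>q \<psi> x) = qcnj x \<cdot>\<^sub>q \<psi> x" for x
      using fwd[OF H, of "(0, x)"]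
      by (simp add: tw_eq Phi_def cd_mult_def z0 qcnj_0 qmult_0_left qmult_0_right linear_neg[OF lf])
    have iii: "\<psi> (\<psi> y \<cdot>\<^sub>q qcnj x + y \<cdot>\<^sub>q \<phi> x) = \<psi> y \<cdot>\<^sub>q qcnj x + y \<cdot>\<^sub>q \<phi> x" for x y
      using fwd[OF H, of "(x, y)"]
      by (simp add: tw_eq Phi_def cd_mult_def)
    show "(\<forall>x. \<phi> (\<phi> x \<cdot>\<^sub>q x) = \<phi> x \<cdot>\<^sub>q x)
       \<and> (\<forall>x. \<phi> (qcnj x \<cdot>\<^sub>q \<psi> x) = qcnj x \<cdot>\<^sub>q \<psi> x)
       \<and> (\<forall>x y. \<psi> (\<psi> y \<cdot>\<^sub>q qcnj x + y \<cdot>\<^sub>q \<phi> x) = \<psi> y \<cdot>\<^sub>q qcnj x + y \<cdot>\<^sub>q \<phi> x)"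
      using i ii iii by blast
  next
    assume R: "(\<forall>x. \<phi> (\<phi> x \<cdot>\<^sub>q x) = \<phi> x \<cdot>\<^sub>q x)
       \<and> (\<forall>x. \<phi> (qcnj x \<cdot>\<^sub>q \<psi> x) = qcnj x \<cdot>\<^sub>q \<psi> x)
       \<and> (\<forall>x y. \<psi> (\<psi> y \<cdot>\<^sub>q qcnj x + y \<cdot>\<^sub>q \<phi> x) = \<psi> y \<cdot>\<^sub>q qcnj x + y \<cdot>\<^sub>q \<phi> x)"
    show "\<forall>z. let z2 = ?M z z in assoc ?M z2 z2 z2 = 0"
    proof
      fix z :: "quat \<times> quat"
      obtain x y where z: "z = (x, y)" by (cases z)
      define w where "w = ?M z z"
      have r1: "\<phi> (\<phi> x \<cdot>\<^sub>q x) = \<phi> x \<cdot>\<^sub>q x"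
        and r2: "\<phi> (qcnj y \<cdot>\<^sub>q \<psi> y) = qcnj y \<cdot>\<^sub>q \<psi> y"
        and r3: "\<psi> (\<psi> y \<cdot>\<^sub>q qcnj x + y \<cdot>\<^sub>q \<phi> x) = \<psi> y \<cdot>\<^sub>q qcnj x + y \<cdot>\<^sub>q \<phi> x"
        using R by blast+
      have Pw: "?P w = w"
        unfolding w_def z
        by (simp only: tw_eq Phi_def cd_mult_def prod.case fst_conv snd_conv linear_diff[OF lf] r1 r2 r3)
      have Mw: "?M w w = cd_mult w w" by (simp add: tw_eq Pw)
      have "assoc ?M w w w = 0"
        unfolding assoc_def Mw by (simp add: tw_eq Pw closure[OF lf lg f1] cd_pa)
      then show "let z2 = ?M z z in assoc ?M z2 z2 z2 = 0" by (simp add: w_def Let_def)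
    qed
  qed
qed

end
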